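(* Let $(M,\le,\circ,e,\rightharpoonup,\leftharpoonup)$ be a biclosed poset. Then: (1) $\mathsf{Dial}_M(\mathsf{Set})$ is a category. (2) The tensor product $\otimes$ is a bifunctor on it, and together with the unit $I=(\mathbb{1},\mathbb{1},e)$ (where $\mathbb{1}$ is a one-element set) and suitable associator and left/right unitor isomorphisms it makes $\mathsf{Dial}_M(\mathsf{Set})$ a (generally non-symmetric) monoidal category. (3) For all objects $A,B,C$ there are bijections, natural in $A,B,C$, $$\mathrm{Hom}(A\otimes B,C)\cong \mathrm{Hom}(B,A\rightharpoonup C),\qquad \mathrm{Hom}(A\otimes B,C)\cong \mathrm{Hom}(A,C\leftharpoonup B).$$ That is, $\mathsf{Dial}_M(\mathsf{Set})$ is monoidal biclosed.
   Context: A biclosed poset $(M,\le,\circ,e,\rightharpoonup,\leftharpoonup)$ is a partially ordered monoid $(M,\le,\circ,e)$, not necessarily commutative, with $\circ$ monotone in each argument, such that for all $a,b\in M$ the following exist: - $a\rightharpoonup b$, the largest $x\in M$ with $a\circ x\le b$; - $b\leftharpoonup a$, the largest $x\in M$ with $x\circ a\le b$. The category $\mathsf{Dial}_M(\mathsf{Set})$ of dialectica Lambek spaces is defined as follows. - Objects are triples $(U,X,\alpha)$ with $U,X$ sets and $\alpha:U\times X\to M$ a function. - A morphism $(f,F):(U,X,\alpha)\to(V,Y,\beta)$ is a pair of functions $f:U\to V$ and $F:Y\to X$ such that $\alpha(u,F(y))\le\beta(f(u),y)$ for all $u\in U$ and $y\in Y$. - Composition is $(g,G)\circ(f,F)=(g\circ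 f,\;F\circ G)$, and identities are $(\mathrm{id},\mathrm{id})$. Tensor product: $(U,X,\alpha)\otimes(V,Y,\beta)=(U\times V,\;(V\to X)\times(U\to Y),\;\alpha\otimes\beta)$, where $$(\alpha\otimes\beta)((u,v),(h,k))=\alpha(u,h(v))\circ\beta(k(u),v).$$ Here $S\to T$ denotes the set of all functions from $S$ to $T$. On morphisms $(f,F):(U,X,\alpha)\to(U',X',\alpha')$ and $(g,G):(V,Y,\beta)\to(V',Y',\beta')$, the tensor is $$(f,F)\otimes(g,G)=\big(f\times g,\;(h,k)\mapsto(F\circ h\circ g,\;G\circ k\circ f)\big).$$ Internal homs: for $A=(U,X,\alpha)$ and $C=(V,Y,\beta)$, $$A\rightharpoonup C=\big((U\to V)\times(Y\to X),\;U\times Y,\;\alpha\rightharpoonup\beta\big),\qquad (\alpha\rightharpoonup\beta)((h,H),(u,y))=\alpha(u,H(y))\rightharpoonup\beta(h(u),y),$$ $$C\leftharpoonup A=\big((U\to V)\times(Y\to X),\;U\times Y,\;\beta\leftharpoonup\alpha\big),\qquad (\beta\leftharpoonup\alpha)((h,H),(u,y))=\beta(h(u),y)\leftharpoonup\alpha(u,H(y)).$$ *)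

theory Defs
  imports "HOL-Library.FuncSet"
begin

text \<open>The poset structure of M is the type-class order on the type 'm.
  The monoid operation, unit and the two residuals are explicit parameters.
  'li a b' is the residual a \<rightharpoonup> b (largest x with a o x \<le> b);
  'ri b a' is the residual b \<leftharpoonup> a (largest x with x o a \<le> b).\<close>

definition biclosed_poset ::
  "('m::order \<Rightarrow> 'm \<Rightarrow> 'm) \<Rightarrow> 'm \<Rightarrow> ('m \<Rightarrow> 'm \<Rightarrow> 'm) \<Rightarrow> ('m \<Rightarrow> 'm \<Rightarrow> 'm) \<Rightarrow> bool" where
  "biclosed_poset mult e li ri \<longleftrightarrow>
     (\<forall>a b c. mult (mult a b) c = mult a (mult b c)) \<and>
     (\<forall>a. mult e a = a \<and> mult a e = a) \<and>
     (\<forall>a a' b. a \<le> a' \<longrightarrow> mult a b \<le> mult a' b) \<and>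
     (\<forall>a b b'. b \<le> b' \<longrightarrow> mult a b \<le> mult a b') \<and>
     (\<forall>a b. mult a (li a b) \<le> b \<and> (\<forall>x. mult a x \<le> b \<longrightarrow> x \<le> li a b)) \<and>
     (\<forall>a b. mult (ri b a) a \<le> b \<and> (\<forall>x. mult x a \<le> b \<longrightarrow> x \<le> ri b a))"

text \<open>Functions between sets are represented as
  extensional HOL functions (FuncSet's \<open>\<rightarrow>\<^sub>E\<close>), so that equality of morphisms
  is equality of set-theoretic functions.\<close>

record ('u, 'x, 'm) dobj =
  pos :: "'u set"
  neg :: "'x set"
  rel :: "'u \<Rightarrow> 'x \<Rightarrow> 'm"

definition dhom :: "('u, 'x, 'm::order) dobj \<Rightarrow> ('v, 'y, 'm) dobj \<Rightarrow> (('u \<Rightarrow> 'v) \<times> ('y \<Rightarrow> 'x)) set" where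
  "dhom A B = {(f, F). f \<in> pos A \<rightarrow>\<^sub>E pos B \<and> F \<in> neg B \<rightarrow>\<^sub>E neg A \<and>
      (\<forall>u\<in>pos A. \<forall>y\<in>neg B. rel A u (F y) \<le> rel B (f u) y)}"

definition did :: "('u, 'x, 'm) dobj \<Rightarrow> ('u \<Rightarrow> 'u) \<times> ('x \<Rightarrow> 'x)" where
  "did A = ((\<lambda>u\<in>pos A. u), (\<lambda>x\<in>neg A. x))"

text \<open>\<open>dcomp A C g f\<close> is the composite g o f of f : A \<rightarrow> B and g : B \<rightarrow> C,
  i.e. (g o f, F o G).\<close>
definition dcomp :: "('u, 'x, 'm) dobj \<Rightarrow> ('w, 'z, 'm) dobj \<Rightarrow>
    ('v \<Rightarrow> 'w) \<times> ('z \<Rightarrow> 'y) \<Rightarrow> ('u \<Rightarrow> 'v) \<times> ('y \<Rightarrow> 'x) \<Rightarrow> ('u \<Rightarrow> 'w) \<times> ('z \<Rightarrow> 'x)" where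
  "dcomp A C g f = (compose (pos A) (fst g) (fst f), compose (neg C) (snd f) (snd g))"

definition diso :: "('u, 'x, 'm::order) dobj \<Rightarrow> ('v, 'y, 'm) dobj \<Rightarrow> ('u \<Rightarrow> 'v) \<times> ('y \<Rightarrow> 'x) \<Rightarrow> bool" where
  "diso A B f \<longleftrightarrow> f \<in> dhom A B \<and>
     (\<exists>g\<in>dhom B A. dcomp A A g f = did A \<and> dcomp B B f g = did B)"

definition dtensor :: "('m \<Rightarrow> 'm \<Rightarrow> 'm) \<Rightarrow> ('u, 'x, 'm) dobj \<Rightarrow> ('v, 'y, 'm) dobj \<Rightarrow>
    ('u \<times> 'v, ('v \<Rightarrow> 'x) \<times> ('u \<Rightarrow> 'y), 'm) dobj" where
  "dtensor mult A B =
     \<lparr>pos = pos A \<times> pos B,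
      neg = (pos B \<rightarrow>\<^sub>E neg A) \<times> (pos A \<rightarrow>\<^sub>E neg B),
      rel = (\<lambda>(u, v) (h, k). mult (rel A u (h v)) (rel B v (k u)))\<rparr>"

definition dtensor_mor :: "('u, 'x, 'm) dobj \<Rightarrow> ('v, 'y, 'm) dobj \<Rightarrow>
    ('u2, 'x2, 'm) dobj \<Rightarrow> ('v2, 'y2, 'm) dobj \<Rightarrow>
    ('u \<Rightarrow> 'u2) \<times> ('x2 \<Rightarrow> 'x) \<Rightarrow> ('v \<Rightarrow> 'v2) \<times> ('y2 \<Rightarrow> 'y) \<Rightarrow>
    ('u \<times> 'v \<Rightarrow> 'u2 \<times> 'v2) \<times> (('v2 \<Rightarrow> 'x2) \<times> ('u2 \<Rightarrow> 'y2) \<Rightarrow> ('v \<Rightarrow> 'x) \<times> ('u \<Rightarrow> 'y))" where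
  "dtensor_mor A B A' B' f g =
     ((\<lambda>(u, v)\<in>pos A \<times> pos B. (fst f u, fst g v)),
      (\<lambda>(h, k)\<in>(pos B' \<rightarrow>\<^sub>E neg A') \<times> (pos A' \<rightarrow>\<^sub>E neg B').
          ((\<lambda>v\<in>pos B. snd f (h (fst g v))), (\<lambda>u\<in>pos A. snd g (k (fst f u))))))"

definition dunit :: "'m \<Rightarrow> (unit, unit, 'm) dobj" where
  "dunit e = \<lparr>pos = {()}, neg = {()}, rel = (\<lambda>_ _. e)\<rparr>"

definition dassoc :: "('u, 'x, 'm) dobj \<Rightarrow> ('v, 'y, 'm) dobj \<Rightarrow> ('w, 'z, 'm) dobj \<Rightarrow>
    (('u \<times> 'v) \<times> 'w \<Rightarrow> 'u \<times> ('v \<times> 'w)) \<times>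
    (('v \<times> 'w \<Rightarrow> 'x) \<times> ('u \<Rightarrow> ('w \<Rightarrow> 'y) \<times> ('v \<Rightarrow> 'z))
       \<Rightarrow> ('w \<Rightarrow> ('v \<Rightarrow> 'x) \<times> ('u \<Rightarrow> 'y)) \<times> ('u \<times> 'v \<Rightarrow> 'z))" where
  "dassoc A B C =
     ((\<lambda>((u, v), w)\<in>(pos A \<times> pos B) \<times> pos C. (u, (v, w))),
      (\<lambda>(h, k)\<in>(pos B \<times> pos C \<rightarrow>\<^sub>E neg A) \<times>
                (pos A \<rightarrow>\<^sub>E (pos C \<rightarrow>\<^sub>E neg B) \<times> (pos B \<rightarrow>\<^sub>E neg C)).
          ((\<lambda>w\<in>pos C. ((\<lambda>v\<in>pos B. h (v, w)), (\<lambda>u\<in>pos A. fst (k u) w))),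
           (\<lambda>(u, v)\<in>pos A \<times> pos B. snd (k u) v))))"

definition dlunitor :: "('u, 'x, 'm) dobj \<Rightarrow>
    (unit \<times> 'u \<Rightarrow> 'u) \<times> ('x \<Rightarrow> ('u \<Rightarrow> unit) \<times> (unit \<Rightarrow> 'x))" where
  "dlunitor A = ((\<lambda>(t, u)\<in>{()} \<times> pos A. u),
                 (\<lambda>x\<in>neg A. ((\<lambda>u\<in>pos A. ()), (\<lambda>t\<in>{()}. x))))"

definition drunitor :: "('u, 'x, 'm) dobj \<Rightarrow>
    ('u \<times> unit \<Rightarrow> 'u) \<times> ('x \<Rightarrow> (unit \<Rightarrow> 'x) \<times> ('u \<Rightarrow> unit))" where
  "drunitor A = ((\<lambda>(u, t)\<in>pos A \<times> {()}. u),
                 (\<lambda>x\<in>neg A. ((\<lambda>t\<in>{()}. x), (\<lambda>u\<in>pos A. ()))))"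

definition dlimp :: "('m \<Rightarrow> 'm \<Rightarrow> 'm) \<Rightarrow> ('u, 'x, 'm) dobj \<Rightarrow> ('v, 'y, 'm) dobj \<Rightarrow>
    (('u \<Rightarrow> 'v) \<times> ('y \<Rightarrow> 'x), 'u \<times> 'y, 'm) dobj" where
  "dlimp li A C =
     \<lparr>pos = (pos A \<rightarrow>\<^sub>E pos C) \<times> (neg C \<rightarrow>\<^sub>E neg A),
      neg = pos A \<times> neg C,
      rel = (\<lambda>(h, H) (u, y). li (rel A u (H y)) (rel C (h u) y))\<rparr>"

definition drimp :: "('m \<Rightarrow> 'm \<Rightarrow> 'm) \<Rightarrow> ('v, 'y, 'm) dobj \<Rightarrow> ('u, 'x, 'm) dobj \<Rightarrow>
    (('u \<Rightarrow> 'v) \<times> ('y \<Rightarrow> 'x), 'u \<times> 'y, 'm) dobj" where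
  "drimp ri C A =
     \<lparr>pos = (pos A \<rightarrow>\<^sub>E pos C) \<times> (neg C \<rightarrow>\<^sub>E neg A),
      neg = pos A \<times> neg C,
      rel = (\<lambda>(h, H) (u, y). ri (rel C (h u) y) (rel A u (H y)))\<rparr>"

text \<open>The same underlying map serves both A \<rightharpoonup> C \<rightarrow> A' \<rightharpoonup> C' and
  C \<leftharpoonup> A \<rightarrow> C' \<leftharpoonup> A'.\<close>
definition dihom_mor :: "('u2, 'x2, 'm) dobj \<Rightarrow> ('u, 'x, 'm) dobj \<Rightarrow>
    ('v, 'y, 'm) dobj \<Rightarrow> ('v2, 'y2, 'm) dobj \<Rightarrow>
    ('u2 \<Rightarrow> 'u) \<times> ('x \<Rightarrow> 'x2) \<Rightarrow> ('v \<Rightarrow> 'v2) \<times> ('y2 \<Rightarrow> 'y) \<Rightarrow>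
    (('u \<Rightarrow> 'v) \<times> ('y \<Rightarrow> 'x) \<Rightarrow> ('u2 \<Rightarrow> 'v2) \<times> ('y2 \<Rightarrow> 'x2)) \<times> ('u2 \<times> 'y2 \<Rightarrow> 'u \<times> 'y)" where
  "dihom_mor A' A C C' a c =
     ((\<lambda>(h, H)\<in>(pos A \<rightarrow>\<^sub>E pos C) \<times> (neg C \<rightarrow>\<^sub>E neg A).
          ((\<lambda>u\<in>pos A'. fst c (h (fst a u))), (\<lambda>y\<in>neg C'. snd a (H (snd c y))))),
      (\<lambda>(u, y)\<in>pos A' \<times> neg C'. (fst a u, snd c y)))"

definition dcurry_l :: "('u, 'x, 'm) dobj \<Rightarrow> ('v, 'y, 'm) dobj \<Rightarrow> ('w, 'z, 'm) dobj \<Rightarrow>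
    ('u \<times> 'v \<Rightarrow> 'w) \<times> ('z \<Rightarrow> ('v \<Rightarrow> 'x) \<times> ('u \<Rightarrow> 'y)) \<Rightarrow>
    ('v \<Rightarrow> ('u \<Rightarrow> 'w) \<times> ('z \<Rightarrow> 'x)) \<times> ('u \<times> 'z \<Rightarrow> 'y)" where
  "dcurry_l A B C \<phi> =
     ((\<lambda>v\<in>pos B. ((\<lambda>u\<in>pos A. fst \<phi> (u, v)), (\<lambda>z\<in>neg C. fst (snd \<phi> z) v))),
      (\<lambda>(u, z)\<in>pos A \<times> neg C. snd (snd \<phi> z) u))"

definition dcurry_r :: "('u, 'x, 'm) dobj \<Rightarrow> ('v, 'y, 'm) dobj \<Rightarrow> ('w, 'z, 'm) dobj \<Rightarrow>
    ('u \<times> 'v \<Rightarrow> 'w) \<times> ('z \<Rightarrow> ('v \<Rightarrow> 'x) \<times> ('u \<Rightarrow> 'y)) \<Rightarrow>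
    ('u \<Rightarrow> ('v \<Rightarrow> 'w) \<times> ('z \<Rightarrow> 'y)) \<times> ('v \<times> 'z \<Rightarrow> 'x)" where
  "dcurry_r A B C \<phi> =
     ((\<lambda>u\<in>pos A. ((\<lambda>v\<in>pos B. fst \<phi> (u, v)), (\<lambda>z\<in>neg C. snd (snd \<phi> z) u))),
      (\<lambda>(v, z)\<in>pos B \<times> neg C. fst (snd \<phi> z) v))"

end

theory Submission
  imports Defs
begin


lemma dhomI:
  assumes "f \<in> pos A \<rightarrow>\<^sub>E pos B" "F \<in> neg B \<rightarrow>\<^sub>E neg A"
    "\<And>u y. u \<in> pos A \<Longrightarrow> y \<in> neg B \<Longrightarrow> rel A u (F y) \<le> rel B (f u) y"
  shows "(f, F) \<in> dhom A B"
  using assms unfolding dhom_def by auto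

lemma bp:
  assumes "biclosed_poset mult e li ri"
  shows bp_assoc: "mult (mult a b) c = mult a (mult b c)"
    and bp_e1: "mult e a = a" and bp_e2: "mult a e = a"
    and bp_mono: "a \<le> a' \<Longrightarrow> b \<le> b' \<Longrightarrow> mult a b \<le> mult a' b'"
    and bp_li: "mult a x \<le> b \<longleftrightarrow> x \<le> li a b"
    and bp_ri: "mult x a \<le> b \<longleftrightarrow> x \<le> ri b a"
proof -
  note A = assms[unfolded biclosed_poset_def]
  show "mult (mult a b) c = mult a (mult b c)" "mult e a = a" "mult a e = a" using A by auto
  show "a \<le> a' \<Longrightarrow> b \<le> b' \<Longrightarrow> mult a b \<le> mult a' b'" using A by (meson order_trans)
  show "mult a x \<le> b \<longleftrightarrow> x \<le> li a b" using A
    by (meson order_trans)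
  show "mult x a \<le> b \<longleftrightarrow> x \<le> ri b a" using A
    by (meson order_trans)
qed

lemma dt_pos[simp]: "pos (dtensor mult A B) = pos A \<times> pos B" by (simp add: dtensor_def)
lemma dt_neg[simp]: "neg (dtensor mult A B) = (pos B \<rightarrow>\<^sub>E neg A) \<times> (pos A \<rightarrow>\<^sub>E neg B)" by (simp add: dtensor_def)
lemma dt_rel[simp]: "rel (dtensor mult A B) x y = mult (rel A (fst x) (fst y (snd x))) (rel B (snd x) (snd y (fst x)))" by (simp add: dtensor_def split: prod.splits)
lemma du_pos[simp]: "pos (dunit e) = {()}" by (simp add: dunit_def)
lemma du_neg[simp]: "neg (dunit e) = {()}" by (simp add: dunit_def)
lemma du_rel[simp]: "rel (dunit e) x y = e" by (simp add: dunit_def)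
lemma dl_pos[simp]: "pos (dlimp li A C) = (pos A \<rightarrow>\<^sub>E pos C) \<times> (neg C \<rightarrow>\<^sub>E neg A)" by (simp add: dlimp_def)
lemma dl_neg[simp]: "neg (dlimp li A C) = pos A \<times> neg C" by (simp add: dlimp_def)
lemma dl_rel[simp]: "rel (dlimp li A C) x y = li (rel A (fst y) (snd x (snd y))) (rel C (fst x (fst y)) (snd y))"
  by (simp add: dlimp_def split: prod.splits)
lemma dr_pos[simp]: "pos (drimp ri C A) = (pos A \<rightarrow>\<^sub>E pos C) \<times> (neg C \<rightarrow>\<^sub>E neg A)" by (simp add: drimp_def)
lemma dr_neg[simp]: "neg (drimp ri C A) = pos A \<times> neg C" by (simp add: drimp_def)
lemma dr_rel[simp]: "rel (drimp ri C A) x y = ri (rel C (fst x (fst y)) (snd y)) (rel A (fst y) (snd x (snd y)))"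
  by (simp add: drimp_def split: prod.splits)

lemma did_dunit: "did (dunit e) = ((\<lambda>u\<in>{()}. ()), (\<lambda>u\<in>{()}. ()))"
  by (simp add: did_def dunit_def)

lemma dcomp_alt: "dcomp A C g f = ((\<lambda>x\<in>pos A. fst g (fst f x)), (\<lambda>z\<in>neg C. snd f (snd g z)))"
  by (simp add: dcomp_def compose_def)

lemma unit_restrict: "h \<in> S \<rightarrow>\<^sub>E {()} \<Longrightarrow> (\<lambda>u\<in>S. ()) = h"
  by (metis (full_types) PiE_restrict old.unit.exhaust restrict_ext)

lemma unit_fun: "k \<in> {()} \<rightarrow>\<^sub>E S \<Longrightarrow> (\<lambda>t\<in>{()}. k ()) = k"
  by (metis (full_types) PiE_restrict old.unit.exhaust restrict_ext)

definition dlunitor_inv :: "('u, 'x, 'm) dobj \<Rightarrow> ('u \<Rightarrow> unit \<times> 'u) \<times> (('u \<Rightarrow> unit) \<times> (unit \<Rightarrow> 'x) \<Rightarrow> 'x)" where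
  "dlunitor_inv A = ((\<lambda>u\<in>pos A. ((), u)), (\<lambda>(h, k)\<in>(pos A \<rightarrow>\<^sub>E {()}) \<times> ({()} \<rightarrow>\<^sub>E neg A). k ()))"

definition drunitor_inv :: "('u, 'x, 'm) dobj \<Rightarrow> ('u \<Rightarrow> 'u \<times> unit) \<times> ((unit \<Rightarrow> 'x) \<times> ('u \<Rightarrow> unit) \<Rightarrow> 'x)" where
  "drunitor_inv A = ((\<lambda>u\<in>pos A. (u, ())), (\<lambda>(k, h)\<in>({()} \<rightarrow>\<^sub>E neg A) \<times> (pos A \<rightarrow>\<^sub>E {()}). k ()))"

lemma lunitor_iso:
  assumes bp: "biclosed_poset mult e li ri"
  shows "diso (dtensor mult (dunit e) A) A (dlunitor A)"
  unfolding diso_def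
proof (intro conjI bexI)
  show "dlunitor A \<in> dhom (dtensor mult (dunit e) A) A"
    unfolding dlunitor_def
    by (rule dhomI) (auto simp: restrict_PiE_iff bp_e1[OF bp])
  show "dlunitor_inv A \<in> dhom A (dtensor mult (dunit e) A)"
    unfolding dlunitor_inv_def
    apply (rule dhomI)
    subgoal by (auto simp: restrict_PiE_iff)
    subgoal by (auto simp: restrict_PiE_iff)
    subgoal by (clarsimp simp: bp_e1[OF bp])
    done
  show "dcomp (dtensor mult (dunit e) A) (dtensor mult (dunit e) A) (dlunitor_inv A) (dlunitor A) =
    did (dtensor mult (dunit e) A)"
    unfolding dcomp_alt did_def
    apply (rule prod_eqI; simp only: fst_conv snd_conv; rule restrict_ext)
    subgoal by (clarsimp simp: dlunitor_def dlunitor_inv_def)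
    subgoal for x
    proof -
      assume "x \<in> neg (dtensor mult (dunit e) A)"
      then obtain h k where x: "x = (h,k)" and h: "h \<in> pos A \<rightarrow>\<^sub>E {()}" and k: "k \<in> {()} \<rightarrow>\<^sub>E neg A"
        by (cases x) simp
      have k0: "k () \<in> neg A" using k by auto
      have 1: "snd (dlunitor_inv A) (h,k) = k ()" using h k by (simp add: dlunitor_inv_def)
      have 2: "snd (dlunitor A) (k ()) = ((\<lambda>u\<in>pos A. ()), (\<lambda>t\<in>{()}. k ()))"
        using k0 by (simp add: dlunitor_def)
      show ?thesis unfolding x 1 2 unit_restrict[OF h] unit_fun[OF k] ..
    qed
    done
  show "dcomp A A (dlunitor A) (dlunitor_inv A) = did A"
    unfolding dcomp_alt did_def
    apply (rule prod_eqI; simp only: fst_conv snd_conv; rule restrict_ext)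
    subgoal by (simp add: dlunitor_def dlunitor_inv_def)
    subgoal by (simp add: dlunitor_def dlunitor_inv_def restrict_PiE_iff)
    done
qed

lemma runitor_iso:
  assumes bp: "biclosed_poset mult e li ri"
  shows "diso (dtensor mult A (dunit e)) A (drunitor A)"
  unfolding diso_def
proof (intro conjI bexI)
  show "drunitor A \<in> dhom (dtensor mult A (dunit e)) A"
    unfolding drunitor_def
    by (rule dhomI) (auto simp: restrict_PiE_iff bp_e2[OF bp])
  show "drunitor_inv A \<in> dhom A (dtensor mult A (dunit e))"
    unfolding drunitor_inv_def
    apply (rule dhomI)
    subgoal by (auto simp: restrict_PiE_iff)
    subgoal by (auto simp: restrict_PiE_iff)
    subgoal by (clarsimp simp: bp_e2[OF bp])
    done
  show "dcomp (dtensor mult A (dunit e)) (dtensor mult A (dunit e)) (drunitor_inv A) (drunitor A) =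
    did (dtensor mult A (dunit e))"
    unfolding dcomp_alt did_def
    apply (rule prod_eqI; simp only: fst_conv snd_conv; rule restrict_ext)
    subgoal by (clarsimp simp: drunitor_def drunitor_inv_def)
    subgoal for x
    proof -
      assume "x \<in> neg (dtensor mult A (dunit e))"
      then obtain k h where x: "x = (k,h)" and h: "h \<in> pos A \<rightarrow>\<^sub>E {()}" and k: "k \<in> {()} \<rightarrow>\<^sub>E neg A"
        by (cases x) simp
      have k0: "k () \<in> neg A" using k by auto
      have 1: "snd (drunitor_inv A) (k,h) = k ()" using h k by (simp add: drunitor_inv_def)
      have 2: "snd (drunitor A) (k ()) = ((\<lambda>t\<in>{()}. k ()), (\<lambda>u\<in>pos A. ()))"
        using k0 by (simp add: drunitor_def)
      show ?thesis unfolding x 1 2 unit_restrict[OF h] unit_fun[OF k] ..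
    qed
    done
  show "dcomp A A (drunitor A) (drunitor_inv A) = did A"
    unfolding dcomp_alt did_def
    apply (rule prod_eqI; simp only: fst_conv snd_conv; rule restrict_ext)
    subgoal by (simp add: drunitor_def drunitor_inv_def)
    subgoal by (simp add: drunitor_def drunitor_inv_def restrict_PiE_iff)
    done
qed

lemma lunitor_nat:
  assumes f: "f \<in> dhom A A'"
  shows "dcomp (dtensor mult (dunit e) A) A' f (dlunitor A) =
        dcomp (dtensor mult (dunit e) A) A' (dlunitor A')
          (dtensor_mor (dunit e) A (dunit e) A' (did (dunit e)) f)"
proof -
  obtain f1 F1 where fe: "f = (f1,F1)" by (cases f)
  have f1[simp]: "\<And>x. x \<in> pos A \<Longrightarrow> f1 x \<in> pos A'" and F1[simp]: "\<And>x. x \<in> neg A' \<Longrightarrow> F1 x \<in> neg A"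
    using f fe by (auto simp: dhom_def)
  show ?thesis
    unfolding fe dcomp_alt
    apply (rule prod_eqI; simp only: fst_conv snd_conv; rule restrict_ext)
    subgoal by (clarsimp simp: dlunitor_def dtensor_mor_def did_def)
    subgoal by (simp add: dlunitor_def dtensor_mor_def did_dunit restrict_PiE_iff)
    done
qed

lemma runitor_nat:
  assumes f: "f \<in> dhom A A'"
  shows "dcomp (dtensor mult A (dunit e)) A' f (drunitor A) =
        dcomp (dtensor mult A (dunit e)) A' (drunitor A')
          (dtensor_mor A (dunit e) A' (dunit e) f (did (dunit e)))"
proof -
  obtain f1 F1 where fe: "f = (f1,F1)" by (cases f)
  have f1[simp]: "\<And>x. x \<in> pos A \<Longrightarrow> f1 x \<in> pos A'" and F1[simp]: "\<And>x. x \<in> neg A' \<Longrightarrow> F1 x \<in> neg A"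
    using f fe by (auto simp: dhom_def)
  show ?thesis
    unfolding fe dcomp_alt
    apply (rule prod_eqI; simp only: fst_conv snd_conv; rule restrict_ext)
    subgoal by (clarsimp simp: drunitor_def dtensor_mor_def did_def)
    subgoal by (simp add: drunitor_def dtensor_mor_def did_dunit restrict_PiE_iff)
    done
qed




lemma dhomD:
  assumes "\<phi> \<in> dhom A B"
  shows "fst \<phi> \<in> pos A \<rightarrow>\<^sub>E pos B" "snd \<phi> \<in> neg B \<rightarrow>\<^sub>E neg A"
    "\<And>u y. u \<in> pos A \<Longrightarrow> y \<in> neg B \<Longrightarrow> rel A u (snd \<phi> y) \<le> rel B (fst \<phi> u) y"
  using assms unfolding dhom_def by auto

lemma cat_comp: "f \<in> dhom A B \<Longrightarrow> g \<in> dhom B C \<Longrightarrow> dcomp A C g f \<in> dhom A C"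
  unfolding dcomp_def
  apply (cases f; cases g; simp)
  apply (rule dhomI)
  apply (auto simp: dhom_def compose_def)
  by (meson PiE_mem order_trans)

lemma cat_id: "did A \<in> dhom A A"
  unfolding did_def dhom_def by auto

lemma cat_idl: "f \<in> dhom A B \<Longrightarrow> dcomp A B (did B) f = f"
  unfolding did_def dcomp_def dhom_def
  by (auto simp: compose_def fun_eq_iff PiE_def extensional_def)

lemma cat_idr: "f \<in> dhom A B \<Longrightarrow> dcomp A B f (did A) = f"
  unfolding did_def dcomp_def dhom_def
  by (auto simp: compose_def fun_eq_iff PiE_def extensional_def)

lemma cat_assoc: "f \<in> dhom A B \<Longrightarrow> g \<in> dhom B C \<Longrightarrow> h \<in> dhom C D \<Longrightarrow>
        dcomp A D h (dcomp A C g f) = dcomp A D (dcomp B D h g) f"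
  unfolding dcomp_def dhom_def
  by (auto simp: compose_def fun_eq_iff PiE_def extensional_def Pi_def)




lemma tensor_mor_hom:
  assumes bp: "biclosed_poset mult e li ri"
  and f: "f \<in> dhom A A'" and g: "g \<in> dhom B B'"
  shows "dtensor_mor A B A' B' f g \<in> dhom (dtensor mult A B) (dtensor mult A' B')"
  using f g unfolding dtensor_mor_def dhom_def dtensor_def
  apply (clarsimp)
  apply (intro conjI)
    apply (auto simp: PiE_def Pi_def extensional_def)[2]
  apply clarsimp
  apply (rule bp_mono[OF bp])
  apply (auto simp: PiE_def Pi_def)
  done

lemma tensor_id: "dtensor_mor A B A B (did A) (did B) = did (dtensor mult A B)"
  unfolding dtensor_mor_def did_def dtensor_def
  by (auto simp: fun_eq_iff PiE_def Pi_def extensional_def)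

lemma tensor_comp:
  "f \<in> dhom A A' \<Longrightarrow> f' \<in> dhom A' A'' \<Longrightarrow> g \<in> dhom B B' \<Longrightarrow> g' \<in> dhom B' B'' \<Longrightarrow>
        dtensor_mor A B A'' B'' (dcomp A A'' f' f) (dcomp B B'' g' g) =
        dcomp (dtensor mult A B) (dtensor mult A'' B'')
          (dtensor_mor A' B' A'' B'' f' g') (dtensor_mor A B A' B' f g)"
  unfolding dtensor_mor_def dcomp_def dtensor_def dhom_def
  by (auto simp: fun_eq_iff PiE_def Pi_def extensional_def compose_def)




lemma assoc_hom:
  assumes bp: "\<And>a b c. mult (mult a b) c = mult a (mult b c)"
  shows "dassoc A B C \<in> dhom (dtensor mult (dtensor mult A B) C) (dtensor mult A (dtensor mult B C))"
  unfolding dassoc_def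
  apply (rule dhomI)
  subgoal by (auto simp: restrict_PiE_iff)
  subgoal by (simp add: restrict_PiE_iff PiE_iff) (fastforce simp: PiE_iff mem_Times_iff)
  subgoal by (clarsimp simp: bp)
  done

definition dassoc_inv where
  "dassoc_inv A B C =
     ((\<lambda>(u, (v, w))\<in>pos A \<times> (pos B \<times> pos C). ((u, v), w)),
      (\<lambda>(H, K)\<in>(pos C \<rightarrow>\<^sub>E (pos B \<rightarrow>\<^sub>E neg A) \<times> (pos A \<rightarrow>\<^sub>E neg B)) \<times> (pos A \<times> pos B \<rightarrow>\<^sub>E neg C).
          ((\<lambda>(v, w)\<in>pos B \<times> pos C. fst (H w) v),
           (\<lambda>u\<in>pos A. ((\<lambda>w\<in>pos C. snd (H w) u), (\<lambda>v\<in>pos B. K (u, v)))))))"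

lemma assoc_inv_hom:
  assumes bp: "\<And>a b c. mult (mult a b) c = mult a (mult b c)"
  shows "dassoc_inv A B C \<in> dhom (dtensor mult A (dtensor mult B C)) (dtensor mult (dtensor mult A B) C)"
  unfolding dassoc_inv_def
  apply (rule dhomI)
  subgoal by (auto simp: restrict_PiE_iff)
  subgoal by (simp add: restrict_PiE_iff PiE_iff) (fastforce simp: PiE_iff mem_Times_iff)
  subgoal by (auto simp: bp split: prod.splits)
  done

lemma assoc_iso:
  assumes bp: "\<And>a b c. mult (mult a b) c = mult a (mult b c)"
  shows "diso (dtensor mult (dtensor mult A B) C) (dtensor mult A (dtensor mult B C)) (dassoc A B C)"
  unfolding diso_def
  apply (rule conjI[OF assoc_hom[OF bp]])
  apply (rule bexI[OF _ assoc_inv_hom[OF bp]])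
  unfolding dcomp_alt did_def
  apply (intro conjI prod_eqI; simp only: fst_conv snd_conv; rule restrict_ext)
  subgoal by (auto simp: dassoc_inv_def dassoc_def)
  subgoal for z
  proof -
    assume zin: "z \<in> neg (dtensor mult (dtensor mult A B) C)"
    obtain H K where z: "z = (H,K)" by (cases z)
    have H: "H \<in> pos C \<rightarrow>\<^sub>E (pos B \<rightarrow>\<^sub>E neg A) \<times> (pos A \<rightarrow>\<^sub>E neg B)"
      and K: "K \<in> pos A \<times> pos B \<rightarrow>\<^sub>E neg C" using zin z by auto
    define h where "h = (\<lambda>(v, w)\<in>pos B \<times> pos C. fst (H w) v)"
    define k where "k = (\<lambda>u\<in>pos A. ((\<lambda>w\<in>pos C. snd (H w) u), (\<lambda>v\<in>pos B. K (u, v))))"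
    have inv: "snd (dassoc_inv A B C) z = (h,k)"
      using H K by (simp add: dassoc_inv_def z h_def k_def)
    have hin: "h \<in> pos B \<times> pos C \<rightarrow>\<^sub>E neg A" unfolding h_def
      using H by (auto simp: restrict_PiE_iff PiE_iff mem_Times_iff)
    have kin: "k \<in> pos A \<rightarrow>\<^sub>E (pos C \<rightarrow>\<^sub>E neg B) \<times> (pos B \<rightarrow>\<^sub>E neg C)" unfolding k_def
      using H K by (auto simp: restrict_PiE_iff PiE_iff mem_Times_iff)
    have "snd (dassoc A B C) (h,k) = ((\<lambda>w\<in>pos C. ((\<lambda>v\<in>pos B. h (v, w)), (\<lambda>u\<in>pos A. fst (k u) w))),
           (\<lambda>(u, v)\<in>pos A \<times> pos B. snd (k u) v))"
      using hin kin by (simp add: dassoc_def)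
    also have "\<dots> = (H, K)"
    proof (rule prod_eqI; simp only: fst_conv snd_conv)
      show "(\<lambda>w\<in>pos C. ((\<lambda>v\<in>pos B. h (v, w)), (\<lambda>u\<in>pos A. fst (k u) w))) = H"
      proof (rule extensionalityI[OF restrict_extensional])
        show "H \<in> extensional (pos C)" using H by (simp add: PiE_def)
        fix w assume w: "w \<in> pos C"
        have Hw: "fst (H w) \<in> pos B \<rightarrow>\<^sub>E neg A" "snd (H w) \<in> pos A \<rightarrow>\<^sub>E neg B"
          using H w by (auto simp: PiE_iff mem_Times_iff)
        have "(\<lambda>v\<in>pos B. h (v, w)) = fst (H w)"
          using w Hw by (auto simp: h_def intro!: extensionalityI[OF restrict_extensional] simp: PiE_def)
        moreover have "(\<lambda>u\<in>pos A. fst (k u) w) = snd (H w)"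
          using w Hw by (auto simp: k_def intro!: extensionalityI[OF restrict_extensional] simp: PiE_def)
        ultimately show "(\<lambda>w\<in>pos C. ((\<lambda>v\<in>pos B. h (v, w)), (\<lambda>u\<in>pos A. fst (k u) w))) w = H w"
          using w by (simp add: prod_eq_iff)
      qed
      show "(\<lambda>(u, v)\<in>pos A \<times> pos B. snd (k u) v) = K"
        using K by (auto simp: k_def intro!: extensionalityI[OF restrict_extensional] simp: PiE_def)
    qed
    finally show ?thesis using zin by (simp add: z inv[unfolded z])
  qed
  subgoal by (auto simp: dassoc_inv_def dassoc_def)
  subgoal for z
  proof -
    assume zin: "z \<in> neg (dtensor mult A (dtensor mult B C))"
    obtain h k where z: "z = (h,k)" by (cases z)
    have hin: "h \<in> pos B \<times> pos C \<rightarrow>\<^sub>E neg A"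
      and kin: "k \<in> pos A \<rightarrow>\<^sub>E (pos C \<rightarrow>\<^sub>E neg B) \<times> (pos B \<rightarrow>\<^sub>E neg C)" using zin z by auto
    define H where "H = (\<lambda>w\<in>pos C. ((\<lambda>v\<in>pos B. h (v, w)), (\<lambda>u\<in>pos A. fst (k u) w)))"
    define K where "K = (\<lambda>(u, v)\<in>pos A \<times> pos B. snd (k u) v)"
    have as: "snd (dassoc A B C) z = (H,K)"
      using hin kin by (simp add: dassoc_def z H_def K_def)
    have H: "H \<in> pos C \<rightarrow>\<^sub>E (pos B \<rightarrow>\<^sub>E neg A) \<times> (pos A \<rightarrow>\<^sub>E neg B)" unfolding H_def
      using hin kin by (auto simp: restrict_PiE_iff PiE_iff mem_Times_iff)
    have K: "K \<in> pos A \<times> pos B \<rightarrow>\<^sub>E neg C" unfolding K_def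
      using kin by (auto simp: restrict_PiE_iff PiE_iff mem_Times_iff)
    have "snd (dassoc_inv A B C) (H,K) = ((\<lambda>(v, w)\<in>pos B \<times> pos C. fst (H w) v),
           (\<lambda>u\<in>pos A. ((\<lambda>w\<in>pos C. snd (H w) u), (\<lambda>v\<in>pos B. K (u, v)))))"
      using H K by (simp add: dassoc_inv_def)
    also have "\<dots> = (h, k)"
    proof (rule prod_eqI; simp only: fst_conv snd_conv)
      show "(\<lambda>(v, w)\<in>pos B \<times> pos C. fst (H w) v) = h"
        using hin by (auto simp: H_def intro!: extensionalityI[OF restrict_extensional] simp: PiE_def)
      show "(\<lambda>u\<in>pos A. ((\<lambda>w\<in>pos C. snd (H w) u), (\<lambda>v\<in>pos B. K (u, v)))) = k"
      proof (rule extensionalityI[OF restrict_extensional])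
        show "k \<in> extensional (pos A)" using kin by (simp add: PiE_def)
        fix u assume u: "u \<in> pos A"
        have ku: "fst (k u) \<in> pos C \<rightarrow>\<^sub>E neg B" "snd (k u) \<in> pos B \<rightarrow>\<^sub>E neg C"
          using kin u by (auto simp: PiE_iff mem_Times_iff)
        have "(\<lambda>w\<in>pos C. snd (H w) u) = fst (k u)"
          using u ku by (auto simp: H_def intro!: extensionalityI[OF restrict_extensional] simp: PiE_def)
        moreover have "(\<lambda>v\<in>pos B. K (u, v)) = snd (k u)"
          using u ku by (auto simp: K_def intro!: extensionalityI[OF restrict_extensional] simp: PiE_def)
        ultimately show "(\<lambda>u\<in>pos A. ((\<lambda>w\<in>pos C. snd (H w) u), (\<lambda>v\<in>pos B. K (u, v)))) u = k u"
          using u by (simp add: prod_eq_iff)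
      qed
    qed
    finally show ?thesis using zin by (simp add: z as[unfolded z])
  qed
  done



lemma assoc_nat:
  assumes f: "f \<in> dhom A A'" and g: "g \<in> dhom B B'" and h: "h \<in> dhom C C'"
  shows "dcomp (dtensor mult (dtensor mult A B) C) (dtensor mult A' (dtensor mult B' C'))
          (dassoc A' B' C')
          (dtensor_mor (dtensor mult A B) C (dtensor mult A' B') C' (dtensor_mor A B A' B' f g) h) =
        dcomp (dtensor mult (dtensor mult A B) C) (dtensor mult A' (dtensor mult B' C'))
          (dtensor_mor A (dtensor mult B C) A' (dtensor mult B' C') f (dtensor_mor B C B' C' g h))
          (dassoc A B C)"
proof -
  obtain f1 F1 where fe: "f = (f1,F1)" by (cases f)
  obtain g1 G1 where ge: "g = (g1,G1)" by (cases g)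
  obtain h1 H1 where he: "h = (h1,H1)" by (cases h)
  have f1[simp]: "\<And>x. x \<in> pos A \<Longrightarrow> f1 x \<in> pos A'" and F1[simp]: "\<And>x. x \<in> neg A' \<Longrightarrow> F1 x \<in> neg A"
    using f fe by (auto simp: dhom_def)
  have g1[simp]: "\<And>x. x \<in> pos B \<Longrightarrow> g1 x \<in> pos B'" and G1[simp]: "\<And>x. x \<in> neg B' \<Longrightarrow> G1 x \<in> neg B"
    using g ge by (auto simp: dhom_def)
  have h1[simp]: "\<And>x. x \<in> pos C \<Longrightarrow> h1 x \<in> pos C'" and H1[simp]: "\<And>x. x \<in> neg C' \<Longrightarrow> H1 x \<in> neg C"
    using h he by (auto simp: dhom_def)
  show ?thesis
    unfolding fe ge he dcomp_alt
    apply (rule prod_eqI; simp only: fst_conv snd_conv; rule restrict_ext)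
    subgoal by (auto simp: dassoc_def dtensor_mor_def)
    apply clarsimp
    apply (simp add: dassoc_def dtensor_mor_def restrict_PiE_iff PiE_iff prod.case_eq_if mem_Times_iff cong: restrict_cong)
    done
qed



lemma triangle:
  "dcomp (dtensor mult (dtensor mult A (dunit e)) B) (dtensor mult A B)
          (dtensor_mor A (dtensor mult (dunit e) B) A B (did A) (dlunitor B))
          (dassoc A (dunit e) B) =
        dtensor_mor (dtensor mult A (dunit e)) B A B (drunitor A) (did B)"
  unfolding dcomp_alt
  apply (rule prod_eqI)
  subgoal
    by (simp add: dassoc_def dtensor_mor_def drunitor_def dlunitor_def did_def fun_eq_iff)
  apply (simp only: fst_conv snd_conv)
  apply (subst (2) dtensor_mor_def)
  apply (simp only: fst_conv snd_conv dt_neg du_pos du_neg dt_pos)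
  apply (rule restrict_ext)
  subgoal for z
  proof -
    assume "z \<in> (pos B \<rightarrow>\<^sub>E neg A) \<times> (pos A \<rightarrow>\<^sub>E neg B)"
    then obtain h k where z: "z = (h,k)" and h: "h \<in> pos B \<rightarrow>\<^sub>E neg A" and k: "k \<in> pos A \<rightarrow>\<^sub>E neg B"
      by (cases z) simp
    have hv[simp]: "\<And>v. v \<in> pos B \<Longrightarrow> h v \<in> neg A" using h by auto
    have ku[simp]: "\<And>u. u \<in> pos A \<Longrightarrow> k u \<in> neg B" using k by auto
    define h' where "h' = (\<lambda>(t,v)\<in>{()}\<times>pos B. h v)"
    define k' where "k' = (\<lambda>u\<in>pos A. ((\<lambda>u'\<in>pos B. ()), (\<lambda>t\<in>{()}. k u)))"
    have 1: "snd (dtensor_mor A (dtensor mult (dunit e) B) A B (did A) (dlunitor B)) (h,k) = (h',k')"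
      using h k unfolding h'_def k'_def
      apply (simp add: dtensor_mor_def did_def dlunitor_def)
      apply (intro conjI restrict_ext)
       apply (auto simp: mem_Times_iff)
      done
    have h'in: "h' \<in> {()} \<times> pos B \<rightarrow>\<^sub>E neg A" unfolding h'_def by (auto simp: restrict_PiE_iff)
    have k'in: "k' \<in> pos A \<rightarrow>\<^sub>E (pos B \<rightarrow>\<^sub>E {()}) \<times> ({()} \<rightarrow>\<^sub>E neg B)" unfolding k'_def
      by (simp add: restrict_PiE_iff)
    have 2: "snd (dassoc A (dunit e) B) (h',k') = ((\<lambda>w\<in>pos B. ((\<lambda>v\<in>{()}. h w), (\<lambda>u\<in>pos A. ()))), (\<lambda>(u,v)\<in>pos A\<times>{()}. k u))"
      using h'in k'in unfolding dassoc_def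
      apply (simp only: du_pos du_neg dt_pos dt_neg)
      apply (simp add: h'_def k'_def)
      apply (intro conjI restrict_ext)
       apply (auto simp: mem_Times_iff)
      done
    show ?thesis unfolding z 1 2 using h k
      apply simp
      apply (intro conjI restrict_ext)
       apply (auto simp: mem_Times_iff drunitor_def did_def)
      done
  qed
  done




lemma pentagon:
  "dcomp (dtensor mult (dtensor mult (dtensor mult A B) C) D)
              (dtensor mult A (dtensor mult B (dtensor mult C D)))
          (dassoc A B (dtensor mult C D)) (dassoc (dtensor mult A B) C D) =
        dcomp (dtensor mult (dtensor mult (dtensor mult A B) C) D)
              (dtensor mult A (dtensor mult B (dtensor mult C D)))
          (dtensor_mor A (dtensor mult (dtensor mult B C) D) A (dtensor mult B (dtensor mult C D))
             (did A) (dassoc B C D))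
          (dcomp (dtensor mult (dtensor mult (dtensor mult A B) C) D)
                 (dtensor mult A (dtensor mult (dtensor mult B C) D))
             (dassoc A (dtensor mult B C) D)
             (dtensor_mor (dtensor mult (dtensor mult A B) C) D (dtensor mult A (dtensor mult B C)) D
                (dassoc A B C) (did D)))"
  unfolding dcomp_alt
  apply (rule prod_eqI; simp only: fst_conv snd_conv; rule restrict_ext)
  subgoal by (clarsimp simp: dassoc_def dtensor_mor_def did_def)
  apply clarsimp
  apply (simp add: dassoc_def dtensor_mor_def did_def restrict_PiE_iff PiE_iff prod.case_eq_if mem_Times_iff cong: restrict_cong)
  done



lemma li_mono:
  assumes bp: "biclosed_poset mult e li ri" and "a' \<le> a" "b \<le> b'"
  shows "li a b \<le> li a' b'"
proof -
  have "mult a (li a b) \<le> b" using bp_li[OF bp] by blast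
  hence "mult a' (li a b) \<le> b'" using bp_mono[OF bp, of a' a "li a b" "li a b"] assms
    by (meson order_trans order_refl)
  thus ?thesis using bp_li[OF bp] by blast
qed

lemma ri_mono:
  assumes bp: "biclosed_poset mult e li ri" and "a' \<le> a" "b \<le> b'"
  shows "ri b a \<le> ri b' a'"
proof -
  have "mult (ri b a) a \<le> b" using bp_ri[OF bp] by blast
  hence "mult (ri b a) a' \<le> b'" using bp_mono[OF bp, of "ri b a" "ri b a" a' a] assms
    by (meson order_trans order_refl)
  thus ?thesis using bp_ri[OF bp] by blast
qed

lemma ihom_hom:
  assumes bp: "biclosed_poset mult e li ri"
    and a: "a \<in> dhom A' A" and c: "c \<in> dhom C C'"
  shows "dihom_mor A' A C C' a c \<in> dhom (dlimp li A C) (dlimp li A' C') \<and>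
         dihom_mor A' A C C' a c \<in> dhom (drimp ri C A) (drimp ri C' A')"
proof -
  obtain f F where ae: "a = (f,F)" by (cases a)
  obtain g G where ce: "c = (g,G)" by (cases c)
  have f[simp]: "\<And>x. x \<in> pos A' \<Longrightarrow> f x \<in> pos A" and F[simp]: "\<And>x. x \<in> neg A \<Longrightarrow> F x \<in> neg A'"
    and fr: "\<And>u y. u \<in> pos A' \<Longrightarrow> y \<in> neg A \<Longrightarrow> rel A' u (F y) \<le> rel A (f u) y"
    using a ae by (auto simp: dhom_def)
  have g[simp]: "\<And>x. x \<in> pos C \<Longrightarrow> g x \<in> pos C'" and G[simp]: "\<And>x. x \<in> neg C' \<Longrightarrow> G x \<in> neg C"
    and gr: "\<And>u y. u \<in> pos C \<Longrightarrow> y \<in> neg C' \<Longrightarrow> rel C u (G y) \<le> rel C' (g u) y"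
    using c ce by (auto simp: dhom_def)
  have m1: "fst (dihom_mor A' A C C' a c) \<in> ((pos A \<rightarrow>\<^sub>E pos C) \<times> (neg C \<rightarrow>\<^sub>E neg A)) \<rightarrow>\<^sub>E ((pos A' \<rightarrow>\<^sub>E pos C') \<times> (neg C' \<rightarrow>\<^sub>E neg A'))"
    unfolding dihom_mor_def ae ce by (auto simp: restrict_PiE_iff PiE_iff)
  have m2: "snd (dihom_mor A' A C C' a c) \<in> pos A' \<times> neg C' \<rightarrow>\<^sub>E pos A \<times> neg C"
    unfolding dihom_mor_def ae ce by (auto simp: restrict_PiE_iff)
  have r: "rel A' u (F (H (G y))) \<le> rel A (f u) (H (G y)) \<and> rel C (h (f u)) (G y) \<le> rel C' (g (h (f u))) y"
    if "h \<in> pos A \<rightarrow>\<^sub>E pos C" "H \<in> neg C \<rightarrow>\<^sub>E neg A" "u \<in> pos A'" "y \<in> neg C'" for h H u y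
    using that by (auto intro!: fr gr simp: PiE_iff)
  show ?thesis
  proof
    show "dihom_mor A' A C C' a c \<in> dhom (dlimp li A C) (dlimp li A' C')"
      using m1 m2 unfolding dhom_def
      apply (simp add: split_beta)
      apply (clarsimp simp: dihom_mor_def ae ce)
      apply (rule li_mono[OF bp])
      using r by auto
    show "dihom_mor A' A C C' a c \<in> dhom (drimp ri C A) (drimp ri C' A')"
      using m1 m2 unfolding dhom_def
      apply (simp add: split_beta)
      apply (clarsimp simp: dihom_mor_def ae ce)
      apply (rule ri_mono[OF bp])
      using r by auto
  qed
qed



definition duncurry_l where
  "duncurry_l A B C \<psi> =
     ((\<lambda>(u, v)\<in>pos A \<times> pos B. fst (fst \<psi> v) u),
      (\<lambda>z\<in>neg C. ((\<lambda>v\<in>pos B. snd (fst \<psi> v) z), (\<lambda>u\<in>pos A. snd \<psi> (u, z)))))"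

lemma curry_l_hom:
  assumes bp: "biclosed_poset mult e li ri" and phi: "\<phi> \<in> dhom (dtensor mult A B) C"
  shows "dcurry_l A B C \<phi> \<in> dhom B (dlimp li A C)"
proof -
  obtain f F where pe: "\<phi> = (f,F)" by (cases \<phi>)
  have f[simp]: "\<And>u v. u \<in> pos A \<Longrightarrow> v \<in> pos B \<Longrightarrow> f (u,v) \<in> pos C"
    and F: "\<And>z. z \<in> neg C \<Longrightarrow> F z \<in> (pos B \<rightarrow>\<^sub>E neg A) \<times> (pos A \<rightarrow>\<^sub>E neg B)"
    and r: "\<And>u v z. u \<in> pos A \<Longrightarrow> v \<in> pos B \<Longrightarrow> z \<in> neg C \<Longrightarrow>
        mult (rel A u (fst (F z) v)) (rel B v (snd (F z) u)) \<le> rel C (f (u,v)) z"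
    using phi pe by (auto simp: dhom_def)
  have F1[simp]: "\<And>z v. z \<in> neg C \<Longrightarrow> v \<in> pos B \<Longrightarrow> fst (F z) v \<in> neg A"
    and F2[simp]: "\<And>z u. z \<in> neg C \<Longrightarrow> u \<in> pos A \<Longrightarrow> snd (F z) u \<in> neg B"
    using F by (auto simp: PiE_iff mem_Times_iff)
  show ?thesis unfolding dcurry_l_def pe
    apply (rule dhomI)
    subgoal by (simp add: restrict_PiE_iff)
    subgoal by (auto simp: restrict_PiE_iff)
    subgoal for v y
      apply (cases y)
      apply (simp add: bp_li[OF bp, symmetric])
      using r by auto
    done
qed

lemma uncurry_l_hom:
  assumes bp: "biclosed_poset mult e li ri" and psi: "\<psi> \<in> dhom B (dlimp li A C)"
  shows "duncurry_l A B C \<psi> \<in> dhom (dtensor mult A B) C"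
proof -
  obtain g G where pe: "\<psi> = (g,G)" by (cases \<psi>)
  have g: "\<And>v. v \<in> pos B \<Longrightarrow> g v \<in> (pos A \<rightarrow>\<^sub>E pos C) \<times> (neg C \<rightarrow>\<^sub>E neg A)"
    and G[simp]: "\<And>u z. u \<in> pos A \<Longrightarrow> z \<in> neg C \<Longrightarrow> G (u,z) \<in> neg B"
    and r: "\<And>u v z. u \<in> pos A \<Longrightarrow> v \<in> pos B \<Longrightarrow> z \<in> neg C \<Longrightarrow>
        rel B v (G (u,z)) \<le> li (rel A u (snd (g v) z)) (rel C (fst (g v) u) z)"
    using psi pe by (auto simp: dhom_def)
  have g1[simp]: "\<And>v u. v \<in> pos B \<Longrightarrow> u \<in> pos A \<Longrightarrow> fst (g v) u \<in> pos C"
    and g2[simp]: "\<And>v z. v \<in> pos B \<Longrightarrow> z \<in> neg C \<Longrightarrow> snd (g v) z \<in> neg A"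
    using g by (auto simp: PiE_iff mem_Times_iff)
  show ?thesis unfolding duncurry_l_def pe
    apply (rule dhomI)
    subgoal by (auto simp: restrict_PiE_iff)
    subgoal by (auto simp: restrict_PiE_iff)
    subgoal for x z
      apply (cases x)
      apply (simp add: bp_li[OF bp])
      using r by auto
    done
qed

lemma curry_l_bij:
  assumes bp: "biclosed_poset mult e li ri"
  shows "bij_betw (dcurry_l A B C) (dhom (dtensor mult A B) C) (dhom B (dlimp li A C))"
proof (rule bij_betw_byWitness[where f'="duncurry_l A B C"])
  show "\<forall>\<phi>\<in>dhom (dtensor mult A B) C. duncurry_l A B C (dcurry_l A B C \<phi>) = \<phi>"
  proof
    fix \<phi> assume phi: "\<phi> \<in> dhom (dtensor mult A B) C"
    obtain f F where pe: "\<phi> = (f,F)" by (cases \<phi>)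
    have fE: "f \<in> pos A \<times> pos B \<rightarrow>\<^sub>E pos C"
      and F: "F \<in> neg C \<rightarrow>\<^sub>E (pos B \<rightarrow>\<^sub>E neg A) \<times> (pos A \<rightarrow>\<^sub>E neg B)"
      using phi pe by (auto simp: dhom_def)
    have fst_eq: "(\<lambda>(u, v)\<in>pos A \<times> pos B. fst (fst (dcurry_l A B C \<phi>) v) u) = f"
      using fE by (auto simp: dcurry_l_def pe intro!: extensionalityI[OF restrict_extensional] simp: PiE_def)
    have snd_eq: "(\<lambda>z\<in>neg C. ((\<lambda>v\<in>pos B. snd (fst (dcurry_l A B C \<phi>) v) z), (\<lambda>u\<in>pos A. snd (dcurry_l A B C \<phi>) (u, z)))) = F"
    proof (rule extensionalityI[OF restrict_extensional])
      show "F \<in> extensional (neg C)" using F by (simp add: PiE_def)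
      fix z assume z: "z \<in> neg C"
      have Fz: "fst (F z) \<in> pos B \<rightarrow>\<^sub>E neg A" "snd (F z) \<in> pos A \<rightarrow>\<^sub>E neg B"
        using F z by (auto simp: PiE_iff mem_Times_iff)
      have "(\<lambda>v\<in>pos B. snd (fst (dcurry_l A B C \<phi>) v) z) = fst (F z)"
        using z Fz by (auto simp: dcurry_l_def pe intro!: extensionalityI[OF restrict_extensional] simp: PiE_def)
      moreover have "(\<lambda>u\<in>pos A. snd (dcurry_l A B C \<phi>) (u, z)) = snd (F z)"
        using z Fz by (auto simp: dcurry_l_def pe intro!: extensionalityI[OF restrict_extensional] simp: PiE_def)
      ultimately show "(\<lambda>z\<in>neg C. ((\<lambda>v\<in>pos B. snd (fst (dcurry_l A B C \<phi>) v) z), (\<lambda>u\<in>pos A. snd (dcurry_l A B C \<phi>) (u, z)))) z = F z"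
        using z by (simp add: prod_eq_iff)
    qed
    show "duncurry_l A B C (dcurry_l A B C \<phi>) = \<phi>"
      unfolding duncurry_l_def fst_eq snd_eq by (simp add: pe)
  qed
  show "\<forall>\<psi>\<in>dhom B (dlimp li A C). dcurry_l A B C (duncurry_l A B C \<psi>) = \<psi>"
  proof
    fix \<psi> assume psi: "\<psi> \<in> dhom B (dlimp li A C)"
    obtain g G where pe: "\<psi> = (g,G)" by (cases \<psi>)
    have gE: "g \<in> pos B \<rightarrow>\<^sub>E (pos A \<rightarrow>\<^sub>E pos C) \<times> (neg C \<rightarrow>\<^sub>E neg A)"
      and GE: "G \<in> pos A \<times> neg C \<rightarrow>\<^sub>E neg B"
      using psi pe by (auto simp: dhom_def)
    have fst_eq: "(\<lambda>v\<in>pos B. ((\<lambda>u\<in>pos A. fst (duncurry_l A B C \<psi>) (u, v)), (\<lambda>z\<in>neg C. fst (snd (duncurry_l A B C \<psi>) z) v))) = g"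
    proof (rule extensionalityI[OF restrict_extensional])
      show "g \<in> extensional (pos B)" using gE by (simp add: PiE_def)
      fix v assume v: "v \<in> pos B"
      have gv: "fst (g v) \<in> pos A \<rightarrow>\<^sub>E pos C" "snd (g v) \<in> neg C \<rightarrow>\<^sub>E neg A"
        using gE v by (auto simp: PiE_iff mem_Times_iff)
      have "(\<lambda>u\<in>pos A. fst (duncurry_l A B C \<psi>) (u, v)) = fst (g v)"
        using v gv by (auto simp: duncurry_l_def pe intro!: extensionalityI[OF restrict_extensional] simp: PiE_def)
      moreover have "(\<lambda>z\<in>neg C. fst (snd (duncurry_l A B C \<psi>) z) v) = snd (g v)"
        using v gv by (auto simp: duncurry_l_def pe intro!: extensionalityI[OF restrict_extensional] simp: PiE_def)
      ultimately show "(\<lambda>v\<in>pos B. ((\<lambda>u\<in>pos A. fst (duncurry_l A B C \<psi>) (u, v)), (\<lambda>z\<in>neg C. fst (snd (duncurry_l A B C \<psi>) z) v))) v = g v"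
        using v by (simp add: prod_eq_iff)
    qed
    have snd_eq: "(\<lambda>(u, z)\<in>pos A \<times> neg C. snd (snd (duncurry_l A B C \<psi>) z) u) = G"
      using GE by (auto simp: duncurry_l_def pe intro!: extensionalityI[OF restrict_extensional] simp: PiE_def)
    show "dcurry_l A B C (duncurry_l A B C \<psi>) = \<psi>"
      unfolding dcurry_l_def fst_eq snd_eq by (simp add: pe)
  qed
  show "dcurry_l A B C ` dhom (dtensor mult A B) C \<subseteq> dhom B (dlimp li A C)"
    using curry_l_hom[OF bp] by blast
  show "duncurry_l A B C ` dhom B (dlimp li A C) \<subseteq> dhom (dtensor mult A B) C"
    using uncurry_l_hom[OF bp] by blast
qed




definition duncurry_r where
  "duncurry_r A B C \<psi> =
     ((\<lambda>(u, v)\<in>pos A \<times> pos B. fst (fst \<psi> u) v),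
      (\<lambda>z\<in>neg C. ((\<lambda>v\<in>pos B. snd \<psi> (v, z)), (\<lambda>u\<in>pos A. snd (fst \<psi> u) z))))"

lemma curry_r_hom:
  assumes bp: "biclosed_poset mult e li ri" and phi: "\<phi> \<in> dhom (dtensor mult A B) C"
  shows "dcurry_r A B C \<phi> \<in> dhom A (drimp ri C B)"
proof -
  obtain f F where pe: "\<phi> = (f,F)" by (cases \<phi>)
  have f[simp]: "\<And>u v. u \<in> pos A \<Longrightarrow> v \<in> pos B \<Longrightarrow> f (u,v) \<in> pos C"
    and F: "\<And>z. z \<in> neg C \<Longrightarrow> F z \<in> (pos B \<rightarrow>\<^sub>E neg A) \<times> (pos A \<rightarrow>\<^sub>E neg B)"
    and r: "\<And>u v z. u \<in> pos A \<Longrightarrow> v \<in> pos B \<Longrightarrow> z \<in> neg C \<Longrightarrow>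
        mult (rel A u (fst (F z) v)) (rel B v (snd (F z) u)) \<le> rel C (f (u,v)) z"
    using phi pe by (auto simp: dhom_def)
  have F1[simp]: "\<And>z v. z \<in> neg C \<Longrightarrow> v \<in> pos B \<Longrightarrow> fst (F z) v \<in> neg A"
    and F2[simp]: "\<And>z u. z \<in> neg C \<Longrightarrow> u \<in> pos A \<Longrightarrow> snd (F z) u \<in> neg B"
    using F by (auto simp: PiE_iff mem_Times_iff)
  show ?thesis unfolding dcurry_r_def pe
    apply (rule dhomI)
    subgoal by (simp add: restrict_PiE_iff)
    subgoal by (auto simp: restrict_PiE_iff)
    subgoal for u y
      apply (cases y)
      apply (simp add: bp_ri[OF bp, symmetric])
      using r by auto
    done
qed

lemma uncurry_r_hom:
  assumes bp: "biclosed_poset mult e li ri" and psi: "\<psi> \<in> dhom A (drimp ri C B)"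
  shows "duncurry_r A B C \<psi> \<in> dhom (dtensor mult A B) C"
proof -
  obtain g G where pe: "\<psi> = (g,G)" by (cases \<psi>)
  have g: "\<And>u. u \<in> pos A \<Longrightarrow> g u \<in> (pos B \<rightarrow>\<^sub>E pos C) \<times> (neg C \<rightarrow>\<^sub>E neg B)"
    and G[simp]: "\<And>v z. v \<in> pos B \<Longrightarrow> z \<in> neg C \<Longrightarrow> G (v,z) \<in> neg A"
    and r: "\<And>u v z. u \<in> pos A \<Longrightarrow> v \<in> pos B \<Longrightarrow> z \<in> neg C \<Longrightarrow>
        rel A u (G (v,z)) \<le> ri (rel C (fst (g u) v) z) (rel B v (snd (g u) z))"
    using psi pe by (auto simp: dhom_def)
  have g1[simp]: "\<And>v u. u \<in> pos A \<Longrightarrow> v \<in> pos B \<Longrightarrow> fst (g u) v \<in> pos C"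
    and g2[simp]: "\<And>u z. u \<in> pos A \<Longrightarrow> z \<in> neg C \<Longrightarrow> snd (g u) z \<in> neg B"
    using g by (auto simp: PiE_iff mem_Times_iff)
  show ?thesis unfolding duncurry_r_def pe
    apply (rule dhomI)
    subgoal by (auto simp: restrict_PiE_iff)
    subgoal by (auto simp: restrict_PiE_iff)
    subgoal for x z
      apply (cases x)
      apply (simp add: bp_ri[OF bp])
      using r by auto
    done
qed

lemma curry_r_bij:
  assumes bp: "biclosed_poset mult e li ri"
  shows "bij_betw (dcurry_r A B C) (dhom (dtensor mult A B) C) (dhom A (drimp ri C B))"
proof (rule bij_betw_byWitness[where f'="duncurry_r A B C"])
  show "\<forall>\<phi>\<in>dhom (dtensor mult A B) C. duncurry_r A B C (dcurry_r A B C \<phi>) = \<phi>"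
  proof
    fix \<phi> assume phi: "\<phi> \<in> dhom (dtensor mult A B) C"
    obtain f F where pe: "\<phi> = (f,F)" by (cases \<phi>)
    have fE: "f \<in> pos A \<times> pos B \<rightarrow>\<^sub>E pos C"
      and F: "F \<in> neg C \<rightarrow>\<^sub>E (pos B \<rightarrow>\<^sub>E neg A) \<times> (pos A \<rightarrow>\<^sub>E neg B)"
      using phi pe by (auto simp: dhom_def)
    have fst_eq: "(\<lambda>(u, v)\<in>pos A \<times> pos B. fst (fst (dcurry_r A B C \<phi>) u) v) = f"
      using fE by (auto simp: dcurry_r_def pe intro!: extensionalityI[OF restrict_extensional] simp: PiE_def)
    have snd_eq: "(\<lambda>z\<in>neg C. ((\<lambda>v\<in>pos B. snd (dcurry_r A B C \<phi>) (v, z)), (\<lambda>u\<in>pos A. snd (fst (dcurry_r A B C \<phi>) u) z))) = F"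
    proof (rule extensionalityI[OF restrict_extensional])
      show "F \<in> extensional (neg C)" using F by (simp add: PiE_def)
      fix z assume z: "z \<in> neg C"
      have Fz: "fst (F z) \<in> pos B \<rightarrow>\<^sub>E neg A" "snd (F z) \<in> pos A \<rightarrow>\<^sub>E neg B"
        using F z by (auto simp: PiE_iff mem_Times_iff)
      have "(\<lambda>v\<in>pos B. snd (dcurry_r A B C \<phi>) (v, z)) = fst (F z)"
        using z Fz by (auto simp: dcurry_r_def pe intro!: extensionalityI[OF restrict_extensional] simp: PiE_def)
      moreover have "(\<lambda>u\<in>pos A. snd (fst (dcurry_r A B C \<phi>) u) z) = snd (F z)"
        using z Fz by (auto simp: dcurry_r_def pe intro!: extensionalityI[OF restrict_extensional] simp: PiE_def)
      ultimately show "(\<lambda>z\<in>neg C. ((\<lambda>v\<in>pos B. snd (dcurry_r A B C \<phi>) (v, z)), (\<lambda>u\<in>pos A. snd (fst (dcurry_r A B C \<phi>) u) z))) z = F z"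
        using z by (simp add: prod_eq_iff)
    qed
    show "duncurry_r A B C (dcurry_r A B C \<phi>) = \<phi>"
      unfolding duncurry_r_def fst_eq snd_eq by (simp add: pe)
  qed
  show "\<forall>\<psi>\<in>dhom A (drimp ri C B). dcurry_r A B C (duncurry_r A B C \<psi>) = \<psi>"
  proof
    fix \<psi> assume psi: "\<psi> \<in> dhom A (drimp ri C B)"
    obtain g G where pe: "\<psi> = (g,G)" by (cases \<psi>)
    have gE: "g \<in> pos A \<rightarrow>\<^sub>E (pos B \<rightarrow>\<^sub>E pos C) \<times> (neg C \<rightarrow>\<^sub>E neg B)"
      and GE: "G \<in> pos B \<times> neg C \<rightarrow>\<^sub>E neg A"
      using psi pe by (auto simp: dhom_def)
    have fst_eq: "(\<lambda>u\<in>pos A. ((\<lambda>v\<in>pos B. fst (duncurry_r A B C \<psi>) (u, v)), (\<lambda>z\<in>neg C. snd (snd (duncurry_r A B C \<psi>) z) u))) = g"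
    proof (rule extensionalityI[OF restrict_extensional])
      show "g \<in> extensional (pos A)" using gE by (simp add: PiE_def)
      fix u assume u: "u \<in> pos A"
      have gu: "fst (g u) \<in> pos B \<rightarrow>\<^sub>E pos C" "snd (g u) \<in> neg C \<rightarrow>\<^sub>E neg B"
        using gE u by (auto simp: PiE_iff mem_Times_iff)
      have "(\<lambda>v\<in>pos B. fst (duncurry_r A B C \<psi>) (u, v)) = fst (g u)"
        using u gu by (auto simp: duncurry_r_def pe intro!: extensionalityI[OF restrict_extensional] simp: PiE_def)
      moreover have "(\<lambda>z\<in>neg C. snd (snd (duncurry_r A B C \<psi>) z) u) = snd (g u)"
        using u gu by (auto simp: duncurry_r_def pe intro!: extensionalityI[OF restrict_extensional] simp: PiE_def)
      ultimately show "(\<lambda>u\<in>pos A. ((\<lambda>v\<in>pos B. fst (duncurry_r A B C \<psi>) (u, v)), (\<lambda>z\<in>neg C. snd (snd (duncurry_r A B C \<psi>) z) u))) u = g u"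
        using u by (simp add: prod_eq_iff)
    qed
    have snd_eq: "(\<lambda>(v, z)\<in>pos B \<times> neg C. fst (snd (duncurry_r A B C \<psi>) z) v) = G"
      using GE by (auto simp: duncurry_r_def pe intro!: extensionalityI[OF restrict_extensional] simp: PiE_def)
    show "dcurry_r A B C (duncurry_r A B C \<psi>) = \<psi>"
      unfolding dcurry_r_def fst_eq snd_eq by (simp add: pe)
  qed
  show "dcurry_r A B C ` dhom (dtensor mult A B) C \<subseteq> dhom A (drimp ri C B)"
    using curry_r_hom[OF bp] by blast
  show "duncurry_r A B C ` dhom A (drimp ri C B) \<subseteq> dhom (dtensor mult A B) C"
    using uncurry_r_hom[OF bp] by blast
qed




lemma curry_l_nat:
  assumes a: "a \<in> dhom A' A" and b: "b \<in> dhom B' B" and c: "c \<in> dhom C C'"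
    and phi: "\<phi> \<in> dhom (dtensor mult A B) C"
  shows "dcurry_l A' B' C'
          (dcomp (dtensor mult A' B') C' c
             (dcomp (dtensor mult A' B') C \<phi> (dtensor_mor A' B' A B a b))) =
        dcomp B' (dlimp li A' C') (dihom_mor A' A C C' a c)
          (dcomp B' (dlimp li A C) (dcurry_l A B C \<phi>) b)"
proof -
  obtain f F where ae: "a = (f,F)" by (cases a)
  obtain g G where be: "b = (g,G)" by (cases b)
  obtain h H where ce: "c = (h,H)" by (cases c)
  obtain p P where pe: "\<phi> = (p,P)" by (cases \<phi>)
  have f[simp]: "\<And>x. x \<in> pos A' \<Longrightarrow> f x \<in> pos A" and F[simp]: "\<And>x. x \<in> neg A \<Longrightarrow> F x \<in> neg A'"
    using a ae by (auto simp: dhom_def)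
  have g[simp]: "\<And>x. x \<in> pos B' \<Longrightarrow> g x \<in> pos B" and G[simp]: "\<And>x. x \<in> neg B \<Longrightarrow> G x \<in> neg B'"
    using b be by (auto simp: dhom_def)
  have h[simp]: "\<And>x. x \<in> pos C \<Longrightarrow> h x \<in> pos C'" and H[simp]: "\<And>x. x \<in> neg C' \<Longrightarrow> H x \<in> neg C"
    using c ce by (auto simp: dhom_def)
  have p[simp]: "\<And>u v. u \<in> pos A \<Longrightarrow> v \<in> pos B \<Longrightarrow> p (u,v) \<in> pos C"
    and P: "\<And>z. z \<in> neg C \<Longrightarrow> P z \<in> (pos B \<rightarrow>\<^sub>E neg A) \<times> (pos A \<rightarrow>\<^sub>E neg B)"
    using phi pe by (auto simp: dhom_def)
  have P1[simp]: "\<And>z v. z \<in> neg C \<Longrightarrow> v \<in> pos B \<Longrightarrow> fst (P z) v \<in> neg A"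
    and P2[simp]: "\<And>z u. z \<in> neg C \<Longrightarrow> u \<in> pos A \<Longrightarrow> snd (P z) u \<in> neg B"
    and P3[simp]: "\<And>z. z \<in> neg C \<Longrightarrow> fst (P z) \<in> pos B \<rightarrow>\<^sub>E neg A"
    and P4[simp]: "\<And>z. z \<in> neg C \<Longrightarrow> snd (P z) \<in> pos A \<rightarrow>\<^sub>E neg B"
    using P by (auto simp: PiE_iff mem_Times_iff)
  show ?thesis
    unfolding ae be ce pe dcomp_alt dcurry_l_def
    apply (rule prod_eqI; simp only: fst_conv snd_conv dl_neg dl_pos dt_neg dt_pos)
    subgoal
      apply (rule restrict_ext)
      apply (simp add: dihom_mor_def dtensor_mor_def restrict_PiE_iff P prod.case_eq_if mem_Times_iff cong: restrict_cong)
      done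
    subgoal
      apply (rule restrict_ext)
      apply clarsimp
      apply (simp add: dihom_mor_def dtensor_mor_def restrict_PiE_iff P prod.case_eq_if mem_Times_iff cong: restrict_cong)
      done
    done
qed
lemma curry_r_nat:
  assumes a: "a \<in> dhom A' A" and b: "b \<in> dhom B' B" and c: "c \<in> dhom C C'"
    and phi: "\<phi> \<in> dhom (dtensor mult A B) C"
  shows "dcurry_r A' B' C'
          (dcomp (dtensor mult A' B') C' c
             (dcomp (dtensor mult A' B') C \<phi> (dtensor_mor A' B' A B a b))) =
        dcomp A' (drimp ri C' B') (dihom_mor B' B C C' b c)
          (dcomp A' (drimp ri C B) (dcurry_r A B C \<phi>) a)"
proof -
  obtain f F where ae: "a = (f,F)" by (cases a)
  obtain g G where be: "b = (g,G)" by (cases b)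
  obtain h H where ce: "c = (h,H)" by (cases c)
  obtain p P where pe: "\<phi> = (p,P)" by (cases \<phi>)
  have f[simp]: "\<And>x. x \<in> pos A' \<Longrightarrow> f x \<in> pos A" and F[simp]: "\<And>x. x \<in> neg A \<Longrightarrow> F x \<in> neg A'"
    using a ae by (auto simp: dhom_def)
  have g[simp]: "\<And>x. x \<in> pos B' \<Longrightarrow> g x \<in> pos B" and G[simp]: "\<And>x. x \<in> neg B \<Longrightarrow> G x \<in> neg B'"
    using b be by (auto simp: dhom_def)
  have h[simp]: "\<And>x. x \<in> pos C \<Longrightarrow> h x \<in> pos C'" and H[simp]: "\<And>x. x \<in> neg C' \<Longrightarrow> H x \<in> neg C"
    using c ce by (auto simp: dhom_def)
  have p[simp]: "\<And>u v. u \<in> pos A \<Longrightarrow> v \<in> pos B \<Longrightarrow> p (u,v) \<in> pos C"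
    and P: "\<And>z. z \<in> neg C \<Longrightarrow> P z \<in> (pos B \<rightarrow>\<^sub>E neg A) \<times> (pos A \<rightarrow>\<^sub>E neg B)"
    using phi pe by (auto simp: dhom_def)
  have P1[simp]: "\<And>z v. z \<in> neg C \<Longrightarrow> v \<in> pos B \<Longrightarrow> fst (P z) v \<in> neg A"
    and P2[simp]: "\<And>z u. z \<in> neg C \<Longrightarrow> u \<in> pos A \<Longrightarrow> snd (P z) u \<in> neg B"
    and P3[simp]: "\<And>z. z \<in> neg C \<Longrightarrow> fst (P z) \<in> pos B \<rightarrow>\<^sub>E neg A"
    and P4[simp]: "\<And>z. z \<in> neg C \<Longrightarrow> snd (P z) \<in> pos A \<rightarrow>\<^sub>E neg B"
    using P by (auto simp: PiE_iff mem_Times_iff)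
  show ?thesis
    unfolding ae be ce pe dcomp_alt dcurry_r_def
    apply (rule prod_eqI; simp only: fst_conv snd_conv dr_neg dr_pos dt_neg dt_pos)
    subgoal
      apply (rule restrict_ext)
      apply (simp add: dihom_mor_def dtensor_mor_def restrict_PiE_iff P prod.case_eq_if mem_Times_iff cong: restrict_cong)
      done
    subgoal
      apply (rule restrict_ext)
      apply clarsimp
      apply (simp add: dihom_mor_def dtensor_mor_def restrict_PiE_iff P prod.case_eq_if mem_Times_iff cong: restrict_cong)
      done
    done
qed

theorem theorem1:
  fixes mult :: "'m::order \<Rightarrow> 'm \<Rightarrow> 'm" and e :: 'm
    and li :: "'m \<Rightarrow> 'm \<Rightarrow> 'm" and ri :: "'m \<Rightarrow> 'm \<Rightarrow> 'm"
  assumes "biclosed_poset mult e li ri"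
  shows
    \<comment> \<open>(1) Dial_M(Set) is a category\<close>
    "(\<forall>(A::(_,_,'m) dobj) (B::(_,_,'m) dobj) (C::(_,_,'m) dobj) f g.
        f \<in> dhom A B \<longrightarrow> g \<in> dhom B C \<longrightarrow> dcomp A C g f \<in> dhom A C) \<and>
     (\<forall>(A::(_,_,'m) dobj). did A \<in> dhom A A) \<and>
     (\<forall>(A::(_,_,'m) dobj) (B::(_,_,'m) dobj) f.
        f \<in> dhom A B \<longrightarrow> dcomp A B (did B) f = f \<and> dcomp A B f (did A) = f) \<and>
     (\<forall>(A::(_,_,'m) dobj) (B::(_,_,'m) dobj) (C::(_,_,'m) dobj) (D::(_,_,'m) dobj) f g h.
        f \<in> dhom A B \<longrightarrow> g \<in> dhom B C \<longrightarrow> h \<in> dhom C D \<longrightarrow>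
        dcomp A D h (dcomp A C g f) = dcomp A D (dcomp B D h g) f) \<and>
     \<comment> \<open>(2) the tensor is a bifunctor\<close>
     (\<forall>(A::(_,_,'m) dobj) (B::(_,_,'m) dobj) (A'::(_,_,'m) dobj) (B'::(_,_,'m) dobj) f g.
        f \<in> dhom A A' \<longrightarrow> g \<in> dhom B B' \<longrightarrow>
        dtensor_mor A B A' B' f g \<in> dhom (dtensor mult A B) (dtensor mult A' B')) \<and>
     (\<forall>(A::(_,_,'m) dobj) (B::(_,_,'m) dobj).
        dtensor_mor A B A B (did A) (did B) = did (dtensor mult A B)) \<and>
     (\<forall>(A::(_,_,'m) dobj) (B::(_,_,'m) dobj) (A'::(_,_,'m) dobj) (B'::(_,_,'m) dobj)
        (A''::(_,_,'m) dobj) (B''::(_,_,'m) dobj) f g f' g'.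
        f \<in> dhom A A' \<longrightarrow> f' \<in> dhom A' A'' \<longrightarrow> g \<in> dhom B B' \<longrightarrow> g' \<in> dhom B' B'' \<longrightarrow>
        dtensor_mor A B A'' B'' (dcomp A A'' f' f) (dcomp B B'' g' g) =
        dcomp (dtensor mult A B) (dtensor mult A'' B'')
          (dtensor_mor A' B' A'' B'' f' g') (dtensor_mor A B A' B' f g)) \<and>
     \<comment> \<open>(2) associator: natural isomorphism\<close>
     (\<forall>(A::(_,_,'m) dobj) (B::(_,_,'m) dobj) (C::(_,_,'m) dobj).
        diso (dtensor mult (dtensor mult A B) C) (dtensor mult A (dtensor mult B C)) (dassoc A B C)) \<and>
     (\<forall>(A::(_,_,'m) dobj) (B::(_,_,'m) dobj) (C::(_,_,'m) dobj)
        (A'::(_,_,'m) dobj) (B'::(_,_,'m) dobj) (C'::(_,_,'m) dobj) f g h.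
        f \<in> dhom A A' \<longrightarrow> g \<in> dhom B B' \<longrightarrow> h \<in> dhom C C' \<longrightarrow>
        dcomp (dtensor mult (dtensor mult A B) C) (dtensor mult A' (dtensor mult B' C'))
          (dassoc A' B' C')
          (dtensor_mor (dtensor mult A B) C (dtensor mult A' B') C' (dtensor_mor A B A' B' f g) h) =
        dcomp (dtensor mult (dtensor mult A B) C) (dtensor mult A' (dtensor mult B' C'))
          (dtensor_mor A (dtensor mult B C) A' (dtensor mult B' C') f (dtensor_mor B C B' C' g h))
          (dassoc A B C)) \<and>
     \<comment> \<open>(2) left and right unitors: natural isomorphisms\<close>
     (\<forall>(A::(_,_,'m) dobj). diso (dtensor mult (dunit e) A) A (dlunitor A)) \<and>
     (\<forall>(A::(_,_,'m) dobj) (A'::(_,_,'m) dobj) f.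
        f \<in> dhom A A' \<longrightarrow>
        dcomp (dtensor mult (dunit e) A) A' f (dlunitor A) =
        dcomp (dtensor mult (dunit e) A) A' (dlunitor A')
          (dtensor_mor (dunit e) A (dunit e) A' (did (dunit e)) f)) \<and>
     (\<forall>(A::(_,_,'m) dobj). diso (dtensor mult A (dunit e)) A (drunitor A)) \<and>
     (\<forall>(A::(_,_,'m) dobj) (A'::(_,_,'m) dobj) f.
        f \<in> dhom A A' \<longrightarrow>
        dcomp (dtensor mult A (dunit e)) A' f (drunitor A) =
        dcomp (dtensor mult A (dunit e)) A' (drunitor A')
          (dtensor_mor A (dunit e) A' (dunit e) f (did (dunit e)))) \<and>
     \<comment> \<open>(2) pentagon axiom\<close>
     (\<forall>(A::(_,_,'m) dobj) (B::(_,_,'m) dobj) (C::(_,_,'m) dobj) (D::(_,_,'m) dobj).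
        dcomp (dtensor mult (dtensor mult (dtensor mult A B) C) D)
              (dtensor mult A (dtensor mult B (dtensor mult C D)))
          (dassoc A B (dtensor mult C D)) (dassoc (dtensor mult A B) C D) =
        dcomp (dtensor mult (dtensor mult (dtensor mult A B) C) D)
              (dtensor mult A (dtensor mult B (dtensor mult C D)))
          (dtensor_mor A (dtensor mult (dtensor mult B C) D) A (dtensor mult B (dtensor mult C D))
             (did A) (dassoc B C D))
          (dcomp (dtensor mult (dtensor mult (dtensor mult A B) C) D)
                 (dtensor mult A (dtensor mult (dtensor mult B C) D))
             (dassoc A (dtensor mult B C) D)
             (dtensor_mor (dtensor mult (dtensor mult A B) C) D (dtensor mult A (dtensor mult B C)) D
                (dassoc A B C) (did D)))) \<and>
     \<comment> \<open>(2) triangle axiom\<close>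
     (\<forall>(A::(_,_,'m) dobj) (B::(_,_,'m) dobj).
        dcomp (dtensor mult (dtensor mult A (dunit e)) B) (dtensor mult A B)
          (dtensor_mor A (dtensor mult (dunit e) B) A B (did A) (dlunitor B))
          (dassoc A (dunit e) B) =
        dtensor_mor (dtensor mult A (dunit e)) B A B (drunitor A) (did B)) \<and>
     \<comment> \<open>(3) the internal homs act on morphisms\<close>
     (\<forall>(A'::(_,_,'m) dobj) (A::(_,_,'m) dobj) (C::(_,_,'m) dobj) (C'::(_,_,'m) dobj) a c.
        a \<in> dhom A' A \<longrightarrow> c \<in> dhom C C' \<longrightarrow>
        dihom_mor A' A C C' a c \<in> dhom (dlimp li A C) (dlimp li A' C') \<and>
        dihom_mor A' A C C' a c \<in> dhom (drimp ri C A) (drimp ri C' A')) \<and>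
     \<comment> \<open>(3) Hom(A \<otimes> B, C) \<cong> Hom(B, A \<rightharpoonup> C), natural in A, B, C\<close>
     (\<forall>(A::(_,_,'m) dobj) (B::(_,_,'m) dobj) (C::(_,_,'m) dobj).
        bij_betw (dcurry_l A B C) (dhom (dtensor mult A B) C) (dhom B (dlimp li A C))) \<and>
     (\<forall>(A::(_,_,'m) dobj) (B::(_,_,'m) dobj) (C::(_,_,'m) dobj)
        (A'::(_,_,'m) dobj) (B'::(_,_,'m) dobj) (C'::(_,_,'m) dobj) a b c \<phi>.
        a \<in> dhom A' A \<longrightarrow> b \<in> dhom B' B \<longrightarrow> c \<in> dhom C C' \<longrightarrow> \<phi> \<in> dhom (dtensor mult A B) C \<longrightarrow>
        dcurry_l A' B' C'
          (dcomp (dtensor mult A' B') C' c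
             (dcomp (dtensor mult A' B') C \<phi> (dtensor_mor A' B' A B a b))) =
        dcomp B' (dlimp li A' C') (dihom_mor A' A C C' a c)
          (dcomp B' (dlimp li A C) (dcurry_l A B C \<phi>) b)) \<and>
     \<comment> \<open>(3) Hom(A \<otimes> B, C) \<cong> Hom(A, C \<leftharpoonup> B), natural in A, B, C\<close>
     (\<forall>(A::(_,_,'m) dobj) (B::(_,_,'m) dobj) (C::(_,_,'m) dobj).
        bij_betw (dcurry_r A B C) (dhom (dtensor mult A B) C) (dhom A (drimp ri C B))) \<and>
     (\<forall>(A::(_,_,'m) dobj) (B::(_,_,'m) dobj) (C::(_,_,'m) dobj)
        (A'::(_,_,'m) dobj) (B'::(_,_,'m) dobj) (C'::(_,_,'m) dobj) a b c \<phi>.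
        a \<in> dhom A' A \<longrightarrow> b \<in> dhom B' B \<longrightarrow> c \<in> dhom C C' \<longrightarrow> \<phi> \<in> dhom (dtensor mult A B) C \<longrightarrow>
        dcurry_r A' B' C'
          (dcomp (dtensor mult A' B') C' c
             (dcomp (dtensor mult A' B') C \<phi> (dtensor_mor A' B' A B a b))) =
        dcomp A' (drimp ri C' B') (dihom_mor B' B C C' b c)
          (dcomp A' (drimp ri C B) (dcurry_r A B C \<phi>) a))"
  proof -
  note bp = assms
  show ?thesis
    apply (intro conjI allI impI)
    subgoal by (rule cat_comp)
    subgoal by (rule cat_id)
    subgoal by (rule cat_idl)
    subgoal by (rule cat_idr)
    subgoal by (rule cat_assoc)
    subgoal by (rule tensor_mor_hom[OF bp])
    subgoal by (rule tensor_id)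
    subgoal by (rule tensor_comp)
    subgoal by (rule assoc_iso) (rule bp_assoc[OF bp])
    subgoal by (rule assoc_nat)
    subgoal by (rule lunitor_iso[OF bp])
    subgoal by (rule lunitor_nat)
    subgoal by (rule runitor_iso[OF bp])
    subgoal by (rule runitor_nat)
    subgoal by (rule pentagon)
    subgoal by (rule triangle)
    subgoal by (rule ihom_hom[OF bp, THEN conjunct1])
    subgoal by (rule ihom_hom[OF bp, THEN conjunct2])
    subgoal by (rule curry_l_bij[OF bp])
    subgoal by (rule curry_l_nat)
    subgoal by (rule curry_r_bij[OF bp])
    subgoal by (rule curry_r_nat)
    done
qed

end
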